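(* Let $\mathbf X\in\mathbb R^{n\times T}$, $k\le n$, and for $\mathbf W\in\mathbb R^{k\times n}$, $\mathbf M\in\mathbb R^{k\times k}$, $\mathbf Y\in\mathbb R^{k\times T}$ define $$L_{PSP}(\mathbf W,\mathbf M,\mathbf Y)=\mathrm{Tr}\Big(-\frac4T\mathbf X^\top\mathbf W^\top\mathbf Y+\frac2T\mathbf Y^\top\mathbf M\mathbf Y\Big)+2\mathrm{Tr}(\mathbf W^\top\mathbf W)-\mathrm{Tr}(\mathbf M^\top\mathbf M).$$ Then (a) for every $\mathbf Y$, $\min_{\mathbf W}\max_{\mathbf M}L_{PSP}(\mathbf W,\mathbf M,\mathbf Y)=\frac1{T^2}\|\mathbf X^\top\mathbf X-\mathbf Y^\top\mathbf Y\|_F^2-\frac1{T^2}\|\mathbf X^\top\mathbf X\|_F^2$, attained at $\mathbf W=\frac1T\mathbf Y\mathbf X^\top$, $\mathbf M=\frac1T\mathbf Y\mathbf Y^\top$; and (b) for every $\mathbf W$, $$\max_{\mathbf M}\min_{\mathbf Y}L_{PSP}(\mathbf W,\mathbf M,\mathbf Y)=\min_{\mathbf Y}\max_{\mathbf M}L_{PSP}(\mathbf W,\mathbf M,\mathbf Y)=\mathrm{Tr}\Big(-\frac3{T^{2/3}}(\mathbf W\mathbf X\mathbf X^\top\mathbf W^\top)^{2/3}+2\mathbf W\mathbf W^\top\Big).$$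
   Context: Matrix fractional powers of positive semidefinite matrices are defined via eigendecomposition; $\|\cdot\|_F$ is the Frobenius norm. *)

theory Defs
  imports "HOL-Analysis.Analysis"
begin

definition frob_norm :: "real^'c^'r \<Rightarrow> real" where
  "frob_norm A = sqrt (\<Sum>i\<in>UNIV. \<Sum>j\<in>UNIV. (A $ i $ j)^2)"

definition diag_mat :: "real^'n \<Rightarrow> real^'n^'n" where
  "diag_mat d = (\<chi> i j. if i = j then d $ i else 0)"

definition psd_powr :: "real^'n^'n \<Rightarrow> real \<Rightarrow> real^'n^'n" where
  "psd_powr A p = (SOME B. \<exists>U d. orthogonal_matrix U \<and> (\<forall>i. d $ i \<ge> 0) \<and>
      A = U ** diag_mat d ** transpose U \<and>
      B = U ** diag_mat (\<chi> i. (d $ i) powr p) ** transpose U)"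

text \<open>The PSP objective; X is n x T, W is k x n, M is k x k, Y is k x T, T = CARD('t).\<close>
definition L_PSP :: "real^'t^'n \<Rightarrow> real^'n^'k \<Rightarrow> real^'k^'k \<Rightarrow> real^'t^'k \<Rightarrow> real" where
  "L_PSP X W M Y =
     trace ((- (4 / real CARD('t))) *\<^sub>R (transpose X ** transpose W ** Y)
            + (2 / real CARD('t)) *\<^sub>R (transpose Y ** M ** Y))
     + 2 * trace (transpose W ** W) - trace (transpose M ** M)"

end

theory Submission
  imports Defs
begin


lemma sym_inner:
  fixes A :: "real^'n^'n"
  assumes "transpose A = A"
  shows "x \<bullet> (A *v y) = (A *v x) \<bullet> y"
  by (metis assms dot_lmul_matrix vector_transpose_matrix)

lemma eig_exists:
  fixes A :: "real^'n^'n"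
  assumes sym: "transpose A = A" and S: "subspace S" "S \<noteq> {0}" and inv: "\<forall>x\<in>S. A *v x \<in> S"
  shows "\<exists>v\<in>S. norm v = 1 \<and> A *v v = (v \<bullet> (A *v v)) *\<^sub>R v"
proof -
  let ?K = "S \<inter> sphere 0 1"
  have cK: "compact ?K"
    using closed_Int_compact[OF closed_subspace[OF S(1)] compact_sphere] by simp
  obtain x where x: "x \<in> S" "x \<noteq> 0" using S subspace_0 by blast
  have "x /\<^sub>R norm x \<in> ?K" using x S(1) by (simp add: subspace_scale)
  hence ne: "?K \<noteq> {}" by blast
  have ct: "continuous_on ?K (\<lambda>x. x \<bullet> (A *v x))"
    by (intro continuous_intros linear_continuous_on linear_linear[THEN iffD1] matrix_vector_mul_linear)
  obtain v where v: "v \<in> ?K" and vmax: "\<forall>y\<in>?K. y \<bullet> (A *v y) \<le> v \<bullet> (A *v v)"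
    using continuous_attains_sup[OF cK ne ct] by blast
  define l where "l = v \<bullet> (A *v v)"
  have nv: "norm v = 1" "v \<in> S" using v by auto
  have gen: "y \<bullet> (A *v y) \<le> l * (norm y)^2" if y: "y \<in> S" for y
  proof (cases "y = 0")
    case True then show ?thesis by simp
  next
    case False
    let ?z = "y /\<^sub>R norm y"
    have "?z \<in> ?K" using y False S(1) by (simp add: subspace_scale)
    hence "?z \<bullet> (A *v ?z) \<le> l" using vmax l_def by blast
    moreover have "?z \<bullet> (A *v ?z) = (y \<bullet> (A *v y)) / (norm y)^2"
      by (simp add: matrix_vector_mult_scaleR power2_eq_square field_simps)
    ultimately show ?thesis using False
      by (simp add: divide_le_eq mult.commute)
  qed
  define u where "u = A *v v - l *\<^sub>R v"
  have uS: "u \<in> S" unfolding u_def using inv nv S(1) by (simp add: subspace_diff subspace_scale)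
  have uv: "u \<bullet> v = 0"
  proof -
    have "v \<bullet> v = 1" using nv by (simp add: dot_square_norm)
    thus ?thesis unfolding u_def l_def by (simp add: inner_diff_left inner_diff_right inner_commute)
  qed
  have uAv: "u \<bullet> (A *v v) = (norm u)^2"
  proof -
    have "A *v v = u + l *\<^sub>R v" by (simp add: u_def)
    thus ?thesis using uv by (simp add: inner_add_right dot_square_norm)
  qed
  have vAu: "v \<bullet> (A *v u) = (norm u)^2" using uAv sym_inner[OF sym] by (metis inner_commute)
  define c where "c = l * (norm u)^2 - u \<bullet> (A *v u)"
  have key: "2 * t * (norm u)^2 \<le> t^2 * c" for t :: real
  proof -
    let ?x = "v + t *\<^sub>R u"
    have xS: "?x \<in> S" using nv uS S(1) by (simp add: subspace_add subspace_scale)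
    have n2: "(norm ?x)^2 = 1 + t^2 * (norm u)^2"
    proof -
      have "(norm ?x)^2 = ?x \<bullet> ?x" by (simp add: dot_square_norm)
      also have "\<dots> = v \<bullet> v + 2 * t * (u \<bullet> v) + t^2 * (u \<bullet> u)"
        by (simp add: inner_add_left inner_add_right inner_commute power2_eq_square algebra_simps)
      also have "\<dots> = 1 + t^2 * (norm u)^2" using uv nv by (simp add: dot_square_norm)
      finally show ?thesis .
    qed
    have q: "?x \<bullet> (A *v ?x) = l + 2 * t * (norm u)^2 + t^2 * (u \<bullet> (A *v u))"
      using uAv vAu l_def
      by (simp add: matrix_vector_right_distrib matrix_vector_mult_scaleR inner_add_left inner_add_right power2_eq_square algebra_simps)
    have "?x \<bullet> (A *v ?x) \<le> l * (norm ?x)^2" using gen xS by blast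
    thus ?thesis unfolding q n2 c_def by (simp add: algebra_simps)
  qed
  have "u = 0"
  proof (rule ccontr)
    assume "u \<noteq> 0"
    hence p: "(norm u)^2 > 0" by simp
    define t where "t = (norm u)^2 / (\<bar>c\<bar> + 1)"
    have tp: "t > 0" using p by (simp add: t_def)
    have "2 * t * (norm u)^2 \<le> t^2 * c" by (rule key)
    hence "2 * (norm u)^2 \<le> t * c" using tp by (simp add: power2_eq_square)
    also have "t * c \<le> t * \<bar>c\<bar>" using tp by (simp add: mult_left_mono)
    also have "t * \<bar>c\<bar> < t * (\<bar>c\<bar> + 1)" using tp by simp
    also have "\<dots> = (norm u)^2" by (simp add: t_def)
    finally show False using p by simp
  qed
  thus ?thesis using nv l_def u_def by auto
qed

lemma eig_basis_sub:
  fixes A :: "real^'n^'n"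
  assumes sym: "transpose A = A"
  shows "subspace S \<Longrightarrow> (\<forall>x\<in>S. A *v x \<in> S) \<Longrightarrow>
    \<exists>B. B \<subseteq> S \<and> finite B \<and> pairwise orthogonal B \<and> (\<forall>b\<in>B. norm b = 1 \<and> (\<exists>l. A *v b = l *\<^sub>R b)) \<and> span B = S"
proof (induction "dim S" arbitrary: S rule: less_induct)
  case less
  show ?case
  proof (cases "S = {0}")
    case True
    then show ?thesis by (intro exI[of _ "{}"]) (simp add: span_empty)
  next
    case False
    obtain v where v: "v \<in> S" "norm v = 1" "A *v v = (v \<bullet> (A *v v)) *\<^sub>R v"
      using eig_exists[OF sym less.prems(1) False less.prems(2)] by blast
    define S' where "S' = {x\<in>S. v \<bullet> x = 0}"
    have vv: "v \<bullet> v = 1" using v by (simp add: dot_square_norm)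
    have sub': "subspace S'"
      unfolding subspace_def
    proof (intro conjI ballI allI)
      show "0 \<in> S'" using less.prems(1) by (simp add: S'_def subspace_0)
      fix x y assume x: "x \<in> S'" and y: "y \<in> S'"
      thus "x + y \<in> S'" using less.prems(1) by (simp add: S'_def subspace_add inner_add_right)
    next
      fix c :: real and x assume x: "x \<in> S'"
      thus "c *\<^sub>R x \<in> S'" using less.prems(1) by (simp add: S'_def subspace_scale)
    qed
    have inv': "\<forall>x\<in>S'. A *v x \<in> S'"
    proof
      fix x assume x: "x \<in> S'"
      have "v \<bullet> (A *v x) = (A *v v) \<bullet> x" using sym_inner[OF sym] .
      also have "\<dots> = ((v \<bullet> (A *v v)) *\<^sub>R v) \<bullet> x"
        by (rule arg_cong[where f="\<lambda>z. z \<bullet> x"]) (rule v(3))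
      also have "\<dots> = 0" using x by (simp add: S'_def)
      finally have "v \<bullet> (A *v x) = 0" .
      moreover have "A *v x \<in> S" using x less.prems(2) by (simp add: S'_def)
      ultimately show "A *v x \<in> S'" by (simp add: S'_def)
    qed
    have "span S' \<subset> span S"
    proof -
      have "S' \<subseteq> S" by (auto simp: S'_def)
      moreover have "v \<notin> S'" using vv by (auto simp: S'_def)
      ultimately have "S' \<subset> S" using v(1) by blast
      thus ?thesis using sub' less.prems(1) by (simp add: span_eq_iff[THEN iffD2])
    qed
    hence "dim S' < dim S" by (rule dim_psubset)
    then obtain B' where B': "B' \<subseteq> S'" "finite B'" "pairwise orthogonal B'"
      "\<forall>b\<in>B'. norm b = 1 \<and> (\<exists>l. A *v b = l *\<^sub>R b)" "span B' = S'"
      using less.hyps[OF _ sub' inv'] by blast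
    show ?thesis
    proof (intro exI[of _ "insert v B'"] conjI)
      show "insert v B' \<subseteq> S" using B'(1) v(1) by (auto simp: S'_def)
      show "finite (insert v B')" using B'(2) by simp
      show "pairwise orthogonal (insert v B')"
      proof -
        have "\<forall>y. y \<in> B' \<and> y \<noteq> v \<longrightarrow> orthogonal v y \<and> orthogonal y v"
        proof (intro allI impI)
          fix y assume "y \<in> B' \<and> y \<noteq> v"
          hence "v \<bullet> y = 0" using B'(1) by (auto simp: S'_def)
          thus "orthogonal v y \<and> orthogonal y v" by (simp add: orthogonal_def inner_commute)
        qed
        thus ?thesis using B'(3) by (simp add: pairwise_insert)
      qed
      show "\<forall>b\<in>insert v B'. norm b = 1 \<and> (\<exists>l. A *v b = l *\<^sub>R b)" using B'(4) v by blast
      show "span (insert v B') = S"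
      proof
        show "span (insert v B') \<subseteq> S"
          using \<open>insert v B' \<subseteq> S\<close> less.prems(1) by (simp add: span_minimal)
        show "S \<subseteq> span (insert v B')"
        proof
          fix x assume x: "x \<in> S"
          have "x - (v \<bullet> x) *\<^sub>R v \<in> S'" unfolding S'_def using x v(1) vv less.prems(1)
            by (simp add: subspace_diff subspace_scale inner_diff_right)
          thus "x \<in> span (insert v B')" using B'(5) span_breakdown_eq by (metis scaleR_conv_of_real real_scaleR_def)
        qed
      qed
    qed
  qed
qed

lemma spectral:
  fixes A :: "real^'n^'n"
  assumes sym: "transpose A = A"
  obtains U d where "orthogonal_matrix U" "A = U ** diag_mat d ** transpose U"
proof -
  obtain B where B: "finite B" "pairwise orthogonal B" "\<forall>b\<in>B. norm b = 1 \<and> (\<exists>l. A *v b = l *\<^sub>R b)"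
    "span B = UNIV"
    using eig_basis_sub[OF sym, of UNIV] by auto
  have "0 \<notin> B" using B(3) by force
  hence ind: "independent B" using B(2) pairwise_orthogonal_independent by blast
  have "card B = dim (UNIV :: (real^'n) set)" using dim_span_eq_card_independent[OF ind] B(4) by simp
  also have "\<dots> = CARD('n)" by simp
  finally have cB: "card (UNIV :: 'n set) = card B" by simp
  obtain h where h: "bij_betw h (UNIV :: 'n set) B"
    using finite_same_card_bij[OF finite[of UNIV] B(1) cB] by blast
  have hB: "h j \<in> B" for j using h by (auto simp: bij_betw_def)
  have hinj: "h i = h j \<Longrightarrow> i = j" for i j using h by (auto simp: bij_betw_def inj_on_def)
  define d :: "real^'n" where "d = (\<chi> j. SOME l. A *v h j = l *\<^sub>R h j)"
  have hd: "A *v h j = (d $ j) *\<^sub>R h j" for j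
  proof -
    have "\<exists>l. A *v h j = l *\<^sub>R h j" using B(3) hB by blast
    hence "A *v h j = (SOME l. A *v h j = l *\<^sub>R h j) *\<^sub>R h j" by (rule someI_ex)
    thus ?thesis unfolding d_def by simp
  qed
  have hh: "h i \<bullet> h j = (if i = j then 1 else 0)" for i j
  proof (cases "i = j")
    case True
    then show ?thesis using B(3) hB by (simp add: dot_square_norm)
  next
    case False
    hence "h i \<noteq> h j" using hinj by blast
    then show ?thesis using False B(2) hB unfolding pairwise_def orthogonal_def by simp
  qed
  define U :: "real^'n^'n" where "U = (\<chi> i j. h j $ i)"
  have "transpose U ** U = mat 1"
  proof -
    have "(transpose U ** U) $ i $ j = mat 1 $ i $ j" for i j
      using hh[of i j] by (simp add: U_def matrix_matrix_mult_def transpose_def inner_vec_def mat_def)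
    thus ?thesis by (simp add: vec_eq_iff)
  qed
  hence orth: "orthogonal_matrix U" by (simp add: orthogonal_matrix)
  have AU: "A ** U = U ** diag_mat d"
  proof -
    have "(A ** U) $ i $ j = (U ** diag_mat d) $ i $ j" for i j
    proof -
      have "(A ** U) $ i $ j = (A *v h j) $ i"
        by (simp add: U_def matrix_matrix_mult_def matrix_vector_mult_def)
      also have "\<dots> = d $ j * h j $ i" by (simp add: hd)
      also have "\<dots> = (U ** diag_mat d) $ i $ j"
        by (simp add: U_def matrix_matrix_mult_def diag_mat_def if_distrib cong: if_cong)
      finally show ?thesis .
    qed
    thus ?thesis by (simp add: vec_eq_iff)
  qed
  have "A = A ** (U ** transpose U)" using orth by (simp add: orthogonal_matrix_def)
  also have "\<dots> = U ** diag_mat d ** transpose U" by (simp add: matrix_mul_assoc AU)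
  finally show ?thesis using that orth by blast
qed




lemma trace_scaleR: "trace (c *\<^sub>R (A::real^'n^'n)) = c * trace A"
  by (simp add: trace_def sum_distrib_left)

lemma trace_tm: "trace (transpose (A::real^'c^'r) ** B) = A \<bullet> B"
  by (simp add: trace_def matrix_matrix_mult_def transpose_def inner_vec_def sum.swap[of _ "UNIV::'c set"])

lemma frob_sq: "(frob_norm A)^2 = A \<bullet> A"
proof -
  have "(\<Sum>i\<in>UNIV. \<Sum>j\<in>UNIV. (A $ i $ j)^2) \<ge> 0" by (intro sum_nonneg) simp
  thus ?thesis by (simp add: frob_norm_def inner_vec_def power2_eq_square)
qed

lemma inner_mat_mul: "(Y::real^'c^'r) \<bullet> (S ** Z) = (transpose S ** Y) \<bullet> Z"
proof -
  have "Y \<bullet> (S ** Z) = trace (transpose Y ** (S ** Z))" by (simp add: trace_tm)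
  also have "\<dots> = trace (transpose (transpose S ** Y) ** Z)"
    by (simp add: matrix_transpose_mul matrix_mul_assoc)
  also have "\<dots> = (transpose S ** Y) \<bullet> Z" by (simp add: trace_tm)
  finally show ?thesis .
qed

lemma inner_quad: "(Z::real^'c^'r) \<bullet> (S ** Z) = trace (S ** (Z ** transpose Z))"
proof -
  have "Z \<bullet> (S ** Z) = trace (transpose Z ** (S ** Z))" by (simp add: trace_tm)
  also have "\<dots> = trace ((S ** Z) ** transpose Z)" by (rule trace_mul_sym)
  finally show ?thesis by (simp add: matrix_mul_assoc)
qed

lemma diag_mul: "diag_mat (a::real^'n) ** diag_mat b = diag_mat (\<chi> i. a$i * b$i)"
proof -
  have "(\<Sum>k\<in>UNIV. (if i = k then a$i else 0) * (if k = j then b$k else 0))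
     = (\<Sum>k\<in>UNIV. if k = i then (if i = j then a$i*b$i else 0) else 0)" for i j :: 'n
    by (rule sum.cong) auto
  thus ?thesis by (simp add: vec_eq_iff diag_mat_def matrix_matrix_mult_def)
qed

lemma diag_transpose: "transpose (diag_mat a) = diag_mat a"
  by (simp add: vec_eq_iff diag_mat_def transpose_def)

lemma diag_one: "diag_mat (\<chi> i. 1) = mat 1"
  by (simp add: vec_eq_iff diag_mat_def mat_def)

lemma trace_diag: "trace (diag_mat a) = (\<Sum>i\<in>UNIV. a$i)"
  by (simp add: trace_def diag_mat_def)

lemma udu_mul:
  assumes "orthogonal_matrix (U::real^'n^'n)"
  shows "(U ** diag_mat a ** transpose U) ** (U ** diag_mat b ** transpose U) = U ** diag_mat (\<chi> i. a$i * b$i) ** transpose U"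
proof -
  have "(U ** diag_mat a ** transpose U) ** (U ** diag_mat b ** transpose U)
      = U ** diag_mat a ** (transpose U ** U) ** diag_mat b ** transpose U"
    by (simp add: matrix_mul_assoc)
  also have "\<dots> = U ** (diag_mat a ** diag_mat b) ** transpose U"
    using assms by (simp add: orthogonal_matrix_def matrix_mul_assoc)
  finally show ?thesis by (simp add: diag_mul)
qed

lemma udu_transpose: "transpose (U ** diag_mat a ** transpose U) = U ** diag_mat a ** transpose (U::real^'n^'n)"
  by (simp add: matrix_transpose_mul diag_transpose matrix_mul_assoc)

lemma udu_trace:
  assumes "orthogonal_matrix (U::real^'n^'n)"
  shows "trace (U ** diag_mat a ** transpose U) = (\<Sum>i\<in>UNIV. a$i)"
proof -
  have "trace (U ** diag_mat a ** transpose U) = trace (U ** (diag_mat a ** transpose U))"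
    by (simp add: matrix_mul_assoc)
  also have "\<dots> = trace ((diag_mat a ** transpose U) ** U)" by (rule trace_mul_sym)
  also have "\<dots> = trace (diag_mat a)" using assms by (simp add: orthogonal_matrix_def matrix_mul_assoc[symmetric])
  finally show ?thesis by (simp add: trace_diag)
qed

lemma udu_one:
  assumes "orthogonal_matrix (U::real^'n^'n)"
  shows "U ** diag_mat (\<chi> i. 1) ** transpose U = mat 1"
  using assms by (simp add: diag_one orthogonal_matrix_def)

lemma SUP_att:
  fixes f :: "'a \<Rightarrow> real"
  assumes "\<And>x. f x \<le> a" "f x0 = a"
  shows "(SUP x. ereal (f x)) = ereal a"
  by (rule antisym) (auto intro!: SUP_least SUP_upper2[where i=x0] simp: assms)

lemma INF_att:
  fixes f :: "'a \<Rightarrow> real"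
  assumes "\<And>x. a \<le> f x" "f x0 = a"
  shows "(INF x. ereal (f x)) = ereal a"
  by (rule antisym) (auto intro!: INF_greatest INF_lower2[where i=x0] simp: assms)

lemma weak_dual:
  fixes F :: "'a \<Rightarrow> 'b \<Rightarrow> ereal"
  shows "(SUP x. INF y. F x y) \<le> (INF y. SUP x. F x y)"
  by (intro SUP_least INF_greatest) (meson INF_lower SUP_upper UNIV_I order_trans)

lemma supM:
  fixes P :: "real^'c^'r"
  shows "(SUP M. ereal (c + s * (M \<bullet> P) - M \<bullet> M)) = ereal (c + s^2/4 * (P \<bullet> P))"
proof (rule SUP_att)
  fix M :: "real^'c^'r"
  have "0 \<le> (M - (s/2) *\<^sub>R P) \<bullet> (M - (s/2) *\<^sub>R P)" by simp
  also have "\<dots> = M \<bullet> M - s * (M \<bullet> P) + s^2/4 * (P \<bullet> P)"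
    by (simp add: inner_diff_left inner_diff_right inner_commute power2_eq_square algebra_simps)
  finally show "c + s * (M \<bullet> P) - M \<bullet> M \<le> c + s^2/4 * (P \<bullet> P)" by simp
next
  show "c + s * (((s/2) *\<^sub>R P) \<bullet> P) - ((s/2) *\<^sub>R P) \<bullet> ((s/2) *\<^sub>R P) = c + s^2/4 * (P \<bullet> P)"
    by (simp add: power2_eq_square algebra_simps)
qed

lemma infW:
  fixes Q :: "real^'c^'r"
  shows "(INF W. ereal (c + 2 * (W \<bullet> W) - s * (W \<bullet> Q))) = ereal (c - s^2/8 * (Q \<bullet> Q))"
proof (rule INF_att)
  fix W :: "real^'c^'r"
  have "0 \<le> 2 * ((W - (s/4) *\<^sub>R Q) \<bullet> (W - (s/4) *\<^sub>R Q))" by simp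
  also have "\<dots> = 2 * (W \<bullet> W) - s * (W \<bullet> Q) + s^2/8 * (Q \<bullet> Q)"
    by (simp add: inner_diff_left inner_diff_right inner_commute power2_eq_square algebra_simps)
  finally show "c - s^2/8 * (Q \<bullet> Q) \<le> c + 2 * (W \<bullet> W) - s * (W \<bullet> Q)" by simp
next
  show "c + 2 * (((s/4) *\<^sub>R Q) \<bullet> ((s/4) *\<^sub>R Q)) - s * (((s/4) *\<^sub>R Q) \<bullet> Q) = c - s^2/8 * (Q \<bullet> Q)"
    by (simp add: power2_eq_square algebra_simps)
qed

lemma L_form:
  "L_PSP X W M Y = - (4 / real CARD('t)) * ((W ** X) \<bullet> Y) + (2 / real CARD('t)) * (Y \<bullet> (M ** Y))
     + 2 * (W \<bullet> W) - M \<bullet> M"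
  for X :: "real^'t^'n"
proof -
  have "trace (transpose X ** transpose W ** Y) = (W ** X) \<bullet> Y"
    by (simp add: trace_tm[symmetric] matrix_transpose_mul)
  moreover have "trace (transpose Y ** M ** Y) = Y \<bullet> (M ** Y)"
    by (simp add: trace_tm[symmetric] matrix_mul_assoc)
  ultimately show ?thesis
    by (simp add: L_PSP_def trace_add trace_sub trace_scaleR trace_tm)
qed

lemma trace_transpose: "trace (transpose (A::real^'n^'n)) = trace A"
  by (simp add: trace_def transpose_def)

lemma inner_WX: "((W::real^'n^'k) ** (X::real^'t^'n)) \<bullet> Y = W \<bullet> (Y ** transpose X)"
proof -
  have "(W ** X) \<bullet> Y = trace (transpose X ** (transpose W ** Y))"
    by (simp add: trace_tm[symmetric] matrix_transpose_mul matrix_mul_assoc)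
  also have "\<dots> = trace ((transpose W ** Y) ** transpose X)" by (rule trace_mul_sym)
  also have "\<dots> = W \<bullet> (Y ** transpose X)" by (simp add: trace_tm[symmetric] matrix_mul_assoc)
  finally show ?thesis .
qed

lemma inner_YMY: "(Y::real^'t^'k) \<bullet> (M ** Y) = M \<bullet> (Y ** transpose Y)"
proof -
  have "Y \<bullet> (M ** Y) = trace (M ** (Y ** transpose Y))" by (rule inner_quad)
  also have "\<dots> = trace ((Y ** transpose Y) ** M)" by (rule trace_mul_sym)
  also have "\<dots> = trace (transpose ((Y ** transpose Y) ** M))" by (rule trace_transpose[symmetric])
  also have "\<dots> = M \<bullet> (Y ** transpose Y)"
    by (simp add: trace_tm[symmetric] matrix_transpose_mul)
  finally show ?thesis .
qed

lemma NN_PP: "(transpose Y ** Y) \<bullet> (transpose Y ** Y) = (Y ** transpose Y) \<bullet> ((Y::real^'t^'k) ** transpose Y)"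
proof -
  have "(transpose Y ** Y) \<bullet> (transpose Y ** Y) = trace (transpose Y ** (Y ** transpose Y ** Y))"
    by (simp add: trace_tm[symmetric] matrix_transpose_mul matrix_mul_assoc)
  also have "\<dots> = trace ((Y ** transpose Y ** Y) ** transpose Y)" by (rule trace_mul_sym)
  also have "\<dots> = (Y ** transpose Y) \<bullet> (Y ** transpose Y)"
    by (simp add: trace_tm[symmetric] matrix_transpose_mul matrix_mul_assoc)
  finally show ?thesis .
qed

lemma KN_QQ: "(transpose X ** X) \<bullet> (transpose Y ** Y) = (Y ** transpose X) \<bullet> ((Y::real^'t^'k) ** transpose (X::real^'t^'n))"
proof -
  have "(transpose X ** X) \<bullet> (transpose Y ** Y) = trace (transpose X ** (X ** transpose Y ** Y))"
    by (simp add: trace_tm[symmetric] matrix_transpose_mul matrix_mul_assoc)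
  also have "\<dots> = trace ((X ** transpose Y ** Y) ** transpose X)" by (rule trace_mul_sym)
  also have "\<dots> = (Y ** transpose X) \<bullet> (Y ** transpose X)"
    by (simp add: trace_tm[symmetric] matrix_transpose_mul matrix_mul_assoc)
  finally show ?thesis .
qed

lemma L_formA:
  "L_PSP X W M Y = (- (4 / real CARD('t)) * (W \<bullet> (Y ** transpose X)) + 2 * (W \<bullet> W))
     + (2 / real CARD('t)) * (M \<bullet> (Y ** transpose Y)) - M \<bullet> M"
  for X :: "real^'t^'n"
  by (simp add: L_form inner_WX inner_YMY)

lemma partA:
  fixes X :: "real^'t^'n" and Y :: "real^'t^'k"
  shows
       "(let v = (1 / real CARD('t)^2) * (frob_norm (transpose X ** X - transpose Y ** Y))^2
                - (1 / real CARD('t)^2) * (frob_norm (transpose X ** X))^2;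
            W0 = (1 / real CARD('t)) *\<^sub>R (Y ** transpose X);
            M0 = (1 / real CARD('t)) *\<^sub>R (Y ** transpose Y)
        in (INF W :: real^'n^'k. SUP M :: real^'k^'k. ereal (L_PSP X W M Y)) = ereal v
           \<and> (SUP M :: real^'k^'k. ereal (L_PSP X W0 M Y)) = ereal v
           \<and> L_PSP X W0 M0 Y = v)"
proof -
  define t where "t = real CARD('t)"
  have tp: "t > 0" by (simp add: t_def)
  define Q where "Q = Y ** transpose X"
  define P where "P = Y ** transpose Y"
  define v where "v = (1 / real CARD('t)^2) * (frob_norm (transpose X ** X - transpose Y ** Y))^2
                - (1 / real CARD('t)^2) * (frob_norm (transpose X ** X))^2"
  have v_eq: "v = (P \<bullet> P - 2 * (Q \<bullet> Q)) / t^2"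
  proof -
    have "v = ((transpose X ** X - transpose Y ** Y) \<bullet> (transpose X ** X - transpose Y ** Y)
          - (transpose X ** X) \<bullet> (transpose X ** X)) / t^2"
      by (simp add: v_def frob_sq t_def field_simps)
    also have "\<dots> = ((transpose Y ** Y) \<bullet> (transpose Y ** Y) - 2 * ((transpose X ** X) \<bullet> (transpose Y ** Y))) / t^2"
      by (simp add: inner_diff_left inner_diff_right inner_commute)
    also have "\<dots> = (P \<bullet> P - 2 * (Q \<bullet> Q)) / t^2"
      by (simp add: NN_PP KN_QQ P_def Q_def)
    finally show ?thesis .
  qed
  have Lf: "L_PSP X W M Y = (- (4/t) * (W \<bullet> Q) + 2 * (W \<bullet> W)) + (2/t) * (M \<bullet> P) - M \<bullet> M"
    for W M by (simp add: L_formA P_def Q_def t_def)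
  have sup: "(SUP M :: real^'k^'k. ereal (L_PSP X W M Y)) = ereal (P \<bullet> P / t^2 + 2 * (W \<bullet> W) - (4/t) * (W \<bullet> Q))"
    for W :: "real^'n^'k"
  proof -
    have "(SUP M :: real^'k^'k. ereal (L_PSP X W M Y)) =
       (SUP M :: real^'k^'k. ereal ((- (4/t) * (W \<bullet> Q) + 2 * (W \<bullet> W)) + (2/t) * (M \<bullet> P) - M \<bullet> M))"
      by (simp add: Lf)
    also have "\<dots> = ereal ((- (4/t) * (W \<bullet> Q) + 2 * (W \<bullet> W)) + (2/t)^2/4 * (P \<bullet> P))"
      by (rule supM)
    finally show ?thesis by (simp add: power2_eq_square field_simps)
  qed
  have inf: "(INF W :: real^'n^'k. SUP M :: real^'k^'k. ereal (L_PSP X W M Y)) = ereal v"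
  proof -
    have "(INF W :: real^'n^'k. SUP M :: real^'k^'k. ereal (L_PSP X W M Y)) =
      (INF W :: real^'n^'k. ereal (P \<bullet> P / t^2 + 2 * (W \<bullet> W) - (4/t) * (W \<bullet> Q)))"
      by (simp add: sup)
    also have "\<dots> = ereal (P \<bullet> P / t^2 - (4/t)^2/8 * (Q \<bullet> Q))" by (rule infW)
    finally show ?thesis using tp by (simp add: v_eq power2_eq_square field_simps)
  qed
  define W0 where "W0 = (1 / real CARD('t)) *\<^sub>R (Y ** transpose X)"
  define M0 where "M0 = (1 / real CARD('t)) *\<^sub>R (Y ** transpose Y)"
  have W0: "W0 = (1/t) *\<^sub>R Q" by (simp add: W0_def Q_def t_def)
  have M0: "M0 = (1/t) *\<^sub>R P" by (simp add: M0_def P_def t_def)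
  have s0: "(SUP M :: real^'k^'k. ereal (L_PSP X W0 M Y)) = ereal v"
    unfolding sup using tp by (simp add: W0 v_eq power2_eq_square field_simps)
  have l0: "L_PSP X W0 M0 Y = v"
    unfolding Lf using tp by (simp add: W0 M0 v_eq power2_eq_square field_simps)
  show ?thesis using inf s0 l0 unfolding Let_def v_def W0_def M0_def by simp
qed

lemma cube_root3: "(x::real) \<ge> 0 \<Longrightarrow> (x powr (1/3))^3 = x"
proof (cases "x = 0")
  case False
  assume "x \<ge> 0"
  hence "x > 0" using False by simp
  have "(x powr (1/3))^3 = x powr (1/3) * x powr (1/3) * x powr (1/3)"
    by (simp add: power3_eq_cube)
  also have "\<dots> = x powr (1/3 + 1/3 + 1/3)" by (simp only: powr_add)
  also have "\<dots> = x" using \<open>x > 0\<close> by simp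
  finally show ?thesis .
qed simp

lemma cube_root_sq: "(x::real) \<ge> 0 \<Longrightarrow> t > 0 \<Longrightarrow> ((x/t) powr (1/3))^2 = x powr (2/3) / t powr (2/3)"
proof -
  assume "x \<ge> 0" "t > 0"
  have "((x/t) powr (1/3))^2 = (x/t) powr (1/3) * (x/t) powr (1/3)"
    by (simp add: power2_eq_square)
  also have "\<dots> = (x/t) powr (1/3 + 1/3)" by (simp only: powr_add)
  also have "\<dots> = (x/t) powr (2/3)" by simp
  also have "\<dots> = x powr (2/3) / t powr (2/3)" using \<open>x \<ge> 0\<close> \<open>t > 0\<close> by (simp add: powr_divide)
  finally show ?thesis .
qed

lemma psd_exists:
  fixes G :: "real^'t^'k"
  shows "\<exists>U d. orthogonal_matrix U \<and> (\<forall>i. d $ i \<ge> 0) \<and> G ** transpose G = U ** diag_mat d ** transpose U"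
proof -
  let ?C = "G ** transpose G"
  have "transpose ?C = ?C" by (simp add: matrix_transpose_mul)
  then obtain U d where U: "orthogonal_matrix U" "?C = U ** diag_mat d ** transpose U" by (rule spectral)
  have "diag_mat d = (transpose U ** U) ** diag_mat d ** (transpose U ** U)"
    using U(1) by (simp add: orthogonal_matrix_def)
  also have "\<dots> = transpose U ** ?C ** U" by (simp add: U(2) matrix_mul_assoc)
  also have "\<dots> = (transpose U ** G) ** transpose (transpose U ** G)"
    by (simp add: matrix_transpose_mul matrix_mul_assoc)
  finally have dd: "diag_mat d = (transpose U ** G) ** transpose (transpose U ** G)" .
  have "d $ i \<ge> 0" for i
  proof -
    have "d $ i = diag_mat d $ i $ i" by (simp add: diag_mat_def)
    also have "\<dots> = (\<Sum>k\<in>UNIV. ((transpose U ** G) $ i $ k)^2)"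
      unfolding dd by (simp add: matrix_matrix_mult_def transpose_def power2_eq_square)
    finally show ?thesis by (simp add: sum_nonneg)
  qed
  thus ?thesis using U by blast
qed

lemma partB:
  fixes X :: "real^'t^'n" and W :: "real^'n^'k"
  shows "(let v = trace ((- (3 / real CARD('t) powr (2/3))) *\<^sub>R
                          psd_powr (W ** X ** transpose X ** transpose W) (2/3)
                       + 2 *\<^sub>R (W ** transpose W))
        in (SUP M :: real^'k^'k. INF Y :: real^'t^'k. ereal (L_PSP X W M Y)) = ereal v
           \<and> (INF Y :: real^'t^'k. SUP M :: real^'k^'k. ereal (L_PSP X W M Y)) = ereal v)"
proof -
  define t where "t = real CARD('t)"
  have tp: "t > 0" by (simp add: t_def)
  define G where "G = W ** X"
  define C where "C = G ** transpose G"
  have C_eq: "W ** X ** transpose X ** transpose W = C"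
    by (simp add: C_def G_def matrix_transpose_mul matrix_mul_assoc)
  have ex: "\<exists>B U d. orthogonal_matrix U \<and> (\<forall>i. d $ i \<ge> 0) \<and> C = U ** diag_mat d ** transpose U \<and>
      B = U ** diag_mat (\<chi> i. (d $ i) powr (2/3)) ** transpose U"
    using psd_exists[of G] by (auto simp: C_def)
  have "\<exists>U d. orthogonal_matrix U \<and> (\<forall>i. d $ i \<ge> 0) \<and> C = U ** diag_mat d ** transpose U \<and>
      psd_powr C (2/3) = U ** diag_mat (\<chi> i. (d $ i) powr (2/3)) ** transpose U"
    unfolding psd_powr_def by (rule someI_ex[OF ex])
  then obtain U and d :: "real^'k" where Ud: "orthogonal_matrix U" "\<forall>i. d $ i \<ge> 0" "C = U ** diag_mat d ** transpose U"
      "psd_powr C (2/3) = U ** diag_mat (\<chi> i. (d $ i) powr (2/3)) ** transpose U" by blast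
  define r :: "real^'k" where "r = (\<chi> j. (d$j / t) powr (1/3))"
  have r0: "r$j \<ge> 0" for j by (simp add: r_def)
  have dr: "d$j = t * (r$j)^3" for j
    using cube_root3[of "d$j / t"] Ud(2) tp by (simp add: r_def field_simps)
  have r2: "(r$j)^2 = d$j powr (2/3) / t powr (2/3)" for j
    using cube_root_sq[of "d$j" t] Ud(2) tp by (simp add: r_def)
  have WW: "trace (W ** transpose W) = W \<bullet> W"
    by (simp add: trace_mul_sym[of W] trace_tm)
  define v where "v = trace ((- (3 / real CARD('t) powr (2/3))) *\<^sub>R
                          psd_powr (W ** X ** transpose X ** transpose W) (2/3)
                       + 2 *\<^sub>R (W ** transpose W))"
  have v_eq: "v = 2 * (W \<bullet> W) - 3 * (\<Sum>j\<in>UNIV. (r$j)^2)"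
  proof -
    have tr: "trace (psd_powr (W ** X ** transpose X ** transpose W) (2/3)) = (\<Sum>j\<in>UNIV. d$j powr (2/3))"
      using C_eq Ud(4) udu_trace[OF Ud(1)] by simp
    have "(\<Sum>j\<in>UNIV. (r$j)^2) = (\<Sum>j\<in>UNIV. d$j powr (2/3)) / t powr (2/3)"
      by (simp add: r2 sum_divide_distrib)
    thus ?thesis unfolding v_def using tr WW by (simp add: trace_add trace_sub trace_scaleR t_def)
  qed
  have Lb: "L_PSP X W M Y = -(4/t) * (G \<bullet> Y) + (2/t) * (Y \<bullet> (M ** Y)) + 2 * (W \<bullet> W) - M \<bullet> M"
    for M Y by (simp add: L_form G_def t_def)
  define a :: "real^'k" where "a = (\<chi> j. inverse (r$j))"
  have ad: "a$j * d$j = t * (r$j)^2" for j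
    by (cases "r$j = 0") (simp_all add: a_def dr power3_eq_cube power2_eq_square field_simps)
  have ada: "a$j * d$j * a$j = t * r$j" for j
    using ad[of j] by (cases "r$j = 0") (simp_all add: a_def power2_eq_square field_simps)
  define Ac where "Ac = U ** diag_mat a ** transpose U"
  have tAc: "transpose Ac = Ac" by (simp add: Ac_def udu_transpose)
  define Y1 where "Y1 = Ac ** G"
  have AcC: "Ac ** C = U ** diag_mat (\<chi> j. a$j * d$j) ** transpose U"
    unfolding Ac_def Ud(3) by (rule udu_mul[OF Ud(1)])
  have GY1: "G \<bullet> Y1 = t * (\<Sum>j\<in>UNIV. (r$j)^2)"
  proof -
    have "G \<bullet> Y1 = trace (Ac ** C)" by (simp add: Y1_def C_def inner_quad)
    also have "\<dots> = (\<Sum>j\<in>UNIV. a$j * d$j)" by (simp add: AcC udu_trace[OF Ud(1)])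
    finally show ?thesis by (simp add: ad sum_distrib_left)
  qed
  have P1: "Y1 ** transpose Y1 = U ** diag_mat (\<chi> j. t * r$j) ** transpose U"
  proof -
    have "Y1 ** transpose Y1 = (Ac ** C) ** Ac"
      by (simp add: Y1_def C_def matrix_transpose_mul matrix_mul_assoc tAc)
    also have "\<dots> = U ** diag_mat (\<chi> j. a$j * d$j * a$j) ** transpose U"
      by (subst AcC) (simp add: Ac_def udu_mul[OF Ud(1)])
    finally show ?thesis by (simp add: ada)
  qed
  have PP1: "(Y1 ** transpose Y1) \<bullet> (Y1 ** transpose Y1) = t^2 * (\<Sum>j\<in>UNIV. (r$j)^2)"
  proof -
    have "(Y1 ** transpose Y1) \<bullet> (Y1 ** transpose Y1) = trace ((Y1 ** transpose Y1) ** (Y1 ** transpose Y1))"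
      by (simp add: trace_tm[symmetric] matrix_transpose_mul)
    also have "\<dots> = (\<Sum>j\<in>UNIV. (t * r$j) * (t * r$j))"
      unfolding P1 by (simp add: udu_mul[OF Ud(1)] udu_trace[OF Ud(1)])
    finally show ?thesis by (simp add: power2_eq_square sum_distrib_left algebra_simps)
  qed
  have supY1: "(SUP M :: real^'k^'k. ereal (L_PSP X W M Y1)) = ereal v"
  proof -
    have "(SUP M :: real^'k^'k. ereal (L_PSP X W M Y1)) =
      (SUP M :: real^'k^'k. ereal ((- (4/t) * (G \<bullet> Y1) + 2 * (W \<bullet> W)) + (2/t) * (M \<bullet> (Y1 ** transpose Y1)) - M \<bullet> M))"
      by (simp add: L_formA inner_WX G_def t_def)
    also have "\<dots> = ereal ((- (4/t) * (G \<bullet> Y1) + 2 * (W \<bullet> W)) + (2/t)^2/4 * ((Y1 ** transpose Y1) \<bullet> (Y1 ** transpose Y1)))"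
      by (rule supM)
    also have "\<dots> = ereal v" using tp
      by (simp add: GY1 PP1 v_eq power2_eq_square field_simps)
    finally show ?thesis .
  qed
  have upper: "(INF Y :: real^'t^'k. SUP M :: real^'k^'k. ereal (L_PSP X W M Y)) \<le> ereal v"
    by (rule INF_lower2[where i=Y1]) (simp_all add: supY1)
  define K where "K = (\<Sum>j\<in>UNIV. 2 * r$j + 1)"
  have K0: "K \<ge> 0" unfolding K_def by (intro sum_nonneg) (simp add: r0)
  have lowerE: "ereal (v - e * K) \<le> (INF Y :: real^'t^'k. ereal (L_PSP X W (U ** diag_mat (\<chi> j. r$j + e) ** transpose U) Y))"
    if e: "0 < e" "e \<le> 1" for e
  proof (rule INF_greatest)
    fix Y :: "real^'t^'k"
    define m :: "real^'k" where "m = (\<chi> j. r$j + e)"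
    have mp: "m$j > 0" for j using r0[of j] e by (simp add: m_def)
    define M where "M = U ** diag_mat m ** transpose U"
    define Bh where "Bh = U ** diag_mat (\<chi> j. sqrt (m$j)) ** transpose U"
    define Bi where "Bi = U ** diag_mat (\<chi> j. 1 / sqrt (m$j)) ** transpose U"
    have hM: "Bh ** Bh = M"
    proof -
      have "(\<chi> j. sqrt (m$j) * sqrt (m$j)) = m" using mp by (simp add: vec_eq_iff less_imp_le)
      thus ?thesis unfolding Bh_def M_def by (simp add: udu_mul[OF Ud(1)])
    qed
    have hBB: "Bi ** Bh = mat 1"
    proof -
      have "(\<chi> j. 1 / sqrt (m$j) * sqrt (m$j)) = (\<chi> j. 1)" using mp by (simp add: vec_eq_iff ) (metis less_irrefl)
      thus ?thesis unfolding Bh_def Bi_def by (simp add: udu_mul[OF Ud(1)] udu_one[OF Ud(1)])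
    qed
    have hBi: "Bi ** Bi = U ** diag_mat (\<chi> j. 1 / m$j) ** transpose U"
    proof -
      have "(\<chi> j. 1 / sqrt (m$j) * (1 / sqrt (m$j))) = (\<chi> j. 1 / m$j)" using mp by (simp add: vec_eq_iff less_imp_le)
      thus ?thesis unfolding Bi_def by (simp add: udu_mul[OF Ud(1)])
    qed
    have tBh: "transpose Bh = Bh" by (simp add: Bh_def udu_transpose)
    have tBi: "transpose Bi = Bi" by (simp add: Bi_def udu_transpose)
    define Z where "Z = Bh ** Y"
    define H where "H = Bi ** G"
    have YMY: "Y \<bullet> (M ** Y) = Z \<bullet> Z"
    proof -
      have "Y \<bullet> (M ** Y) = Y \<bullet> (Bh ** (Bh ** Y))" by (simp add: hM[symmetric] matrix_mul_assoc)
      also have "\<dots> = Z \<bullet> Z" by (simp add: inner_mat_mul tBh Z_def)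
      finally show ?thesis .
    qed
    have GY: "G \<bullet> Y = H \<bullet> Z"
    proof -
      have "G \<bullet> Y = G \<bullet> (Bi ** (Bh ** Y))" by (simp add: matrix_mul_assoc hBB)
      also have "\<dots> = H \<bullet> Z" by (simp add: inner_mat_mul tBi Z_def H_def)
      finally show ?thesis .
    qed
    have HH: "H \<bullet> H = (\<Sum>j\<in>UNIV. 1 / m$j * d$j)"
    proof -
      have "H \<bullet> H = (transpose Bi ** (Bi ** G)) \<bullet> G" unfolding H_def by (rule inner_mat_mul)
      also have "\<dots> = G \<bullet> ((Bi ** Bi) ** G)" by (simp add: tBi matrix_mul_assoc inner_commute)
      also have "\<dots> = trace ((Bi ** Bi) ** C)" by (simp add: inner_quad C_def)
      also have "\<dots> = (\<Sum>j\<in>UNIV. 1 / m$j * d$j)"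
        by (simp add: hBi Ud(3) udu_mul[OF Ud(1)] udu_trace[OF Ud(1)])
      finally show ?thesis .
    qed
    have MM: "M \<bullet> M = (\<Sum>j\<in>UNIV. (m$j)^2)"
    proof -
      have "M \<bullet> M = trace (M ** M)" by (simp add: trace_tm[symmetric] M_def udu_transpose)
      also have "\<dots> = (\<Sum>j\<in>UNIV. (m$j)^2)"
        by (simp add: M_def udu_mul[OF Ud(1)] udu_trace[OF Ud(1)] power2_eq_square)
      finally show ?thesis .
    qed
    have sq: "(2/t) * (Z \<bullet> Z) - (4/t) * (H \<bullet> Z) \<ge> -(2/t) * (H \<bullet> H)"
    proof -
      have "0 \<le> (2/t) * ((Z - H) \<bullet> (Z - H))" using tp by simp
      also have "\<dots> = (2/t) * (Z \<bullet> Z) - (4/t) * (H \<bullet> Z) + (2/t) * (H \<bullet> H)"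
        by (simp add: inner_diff_left inner_diff_right inner_commute algebra_simps)
      finally show ?thesis by simp
    qed
    have comp: "-(2/t) * (1 / m$j * d$j) - (m$j)^2 \<ge> -3 * (r$j)^2 - e * (2 * r$j + e)" for j
    proof -
      have mj: "m$j = r$j + e" by (simp add: m_def)
      have "(2/t) * (1 / m$j * d$j) = 2 * (r$j)^3 / m$j" using tp by (simp add: dr)
      also have "\<dots> \<le> 2 * (r$j)^2"
      proof -
        have "(r$j)^3 \<le> (r$j)^2 * m$j" using r0[of j] e unfolding mj
          by (simp add: power3_eq_cube power2_eq_square algebra_simps)
        thus ?thesis using mp[of j] by (simp add: divide_le_eq)
      qed
      finally have "(2/t) * (1 / m$j * d$j) \<le> 2 * (r$j)^2" .
      moreover have "(m$j)^2 = (r$j)^2 + e * (2 * r$j + e)" unfolding mj by (simp add: power2_eq_square algebra_simps)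
      ultimately show ?thesis by simp
    qed
    have "v - e * K \<le> 2 * (W \<bullet> W) - 3 * (\<Sum>j\<in>UNIV. (r$j)^2) - (\<Sum>j\<in>UNIV. e * (2 * r$j + e))"
    proof -
      have "(\<Sum>j\<in>UNIV. e * (2 * r$j + e)) \<le> (\<Sum>j\<in>UNIV. e * (2 * r$j + 1))"
        using e by (intro sum_mono) simp
      thus ?thesis by (simp add: v_eq K_def sum_distrib_left)
    qed
    also have "\<dots> = 2 * (W \<bullet> W) + (\<Sum>j\<in>UNIV. -3 * (r$j)^2 - e * (2 * r$j + e))"
      by (simp add: sum_subtractf sum_distrib_left sum_negf)
    also have "\<dots> \<le> 2 * (W \<bullet> W) + (\<Sum>j\<in>UNIV. -(2/t) * (1 / m$j * d$j) - (m$j)^2)"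
      using comp by (simp add: sum_mono)
    also have "\<dots> = -(2/t) * (H \<bullet> H) - M \<bullet> M + 2 * (W \<bullet> W)"
      by (simp add: HH MM sum_subtractf sum_distrib_left)
    also have "\<dots> \<le> L_PSP X W M Y"
      using sq by (simp add: Lb YMY GY)
    finally show "ereal (v - e * K) \<le> ereal (L_PSP X W (U ** diag_mat (\<chi> j. r$j + e) ** transpose U) Y)"
      by (simp add: M_def m_def)
  qed
  have lower: "ereal v \<le> (SUP M :: real^'k^'k. INF Y :: real^'t^'k. ereal (L_PSP X W M Y))"
  proof (rule ereal_le_epsilon2)
    fix e :: real assume e: "0 < e"
    define \<epsilon> where "\<epsilon> = min 1 (e / (K + 1))"
    have ep: "0 < \<epsilon>" "\<epsilon> \<le> 1" using e K0 by (auto simp: \<epsilon>_def)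
    have "\<epsilon> * K \<le> e"
    proof -
      have "\<epsilon> * K \<le> (e / (K + 1)) * K" using K0 by (intro mult_right_mono) (auto simp: \<epsilon>_def)
      also have "\<dots> \<le> e" using e K0 by (simp add: field_simps)
      finally show ?thesis .
    qed
    hence "ereal (v - e) \<le> ereal (v - \<epsilon> * K)" by simp
    also have "\<dots> \<le> (SUP M :: real^'k^'k. INF Y :: real^'t^'k. ereal (L_PSP X W M Y))"
      using lowerE[OF ep] by (rule SUP_upper2[OF UNIV_I])
    finally have "ereal (v - e) \<le> (SUP M :: real^'k^'k. INF Y :: real^'t^'k. ereal (L_PSP X W M Y))" .
    hence "ereal (v - e) + ereal e \<le> (SUP M :: real^'k^'k. INF Y :: real^'t^'k. ereal (L_PSP X W M Y)) + ereal e"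
      by (rule add_right_mono)
    thus "ereal v \<le> (SUP M :: real^'k^'k. INF Y :: real^'t^'k. ereal (L_PSP X W M Y)) + ereal e" by simp
  qed
  have wd: "(SUP M :: real^'k^'k. INF Y :: real^'t^'k. ereal (L_PSP X W M Y))
      \<le> (INF Y :: real^'t^'k. SUP M :: real^'k^'k. ereal (L_PSP X W M Y))"
    by (rule weak_dual)
  show ?thesis unfolding Let_def v_def[symmetric]
    using lower upper wd by (meson antisym order_trans)
qed


theorem mainTheorem6:
  fixes X :: "real^'t^'n"
  assumes "CARD('k) \<le> CARD('n)"
  shows
   "(\<forall>Y :: real^'t^'k.
       (let v = (1 / real CARD('t)^2) * (frob_norm (transpose X ** X - transpose Y ** Y))^2
                - (1 / real CARD('t)^2) * (frob_norm (transpose X ** X))^2;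
            W0 = (1 / real CARD('t)) *\<^sub>R (Y ** transpose X);
            M0 = (1 / real CARD('t)) *\<^sub>R (Y ** transpose Y)
        in (INF W :: real^'n^'k. SUP M :: real^'k^'k. ereal (L_PSP X W M Y)) = ereal v
           \<and> (SUP M :: real^'k^'k. ereal (L_PSP X W0 M Y)) = ereal v
           \<and> L_PSP X W0 M0 Y = v))
    \<and>
    (\<forall>W :: real^'n^'k.
       (let v = trace ((- (3 / real CARD('t) powr (2/3))) *\<^sub>R
                          psd_powr (W ** X ** transpose X ** transpose W) (2/3)
                       + 2 *\<^sub>R (W ** transpose W))
        in (SUP M :: real^'k^'k. INF Y :: real^'t^'k. ereal (L_PSP X W M Y)) = ereal v
           \<and> (INF Y :: real^'t^'k. SUP M :: real^'k^'k. ereal (L_PSP X W M Y)) = ereal v))"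
proof (intro conjI allI)
  fix Y :: "real^'t^'k"
  show "let v = (1 / real CARD('t)^2) * (frob_norm (transpose X ** X - transpose Y ** Y))^2
                - (1 / real CARD('t)^2) * (frob_norm (transpose X ** X))^2;
            W0 = (1 / real CARD('t)) *\<^sub>R (Y ** transpose X);
            M0 = (1 / real CARD('t)) *\<^sub>R (Y ** transpose Y)
        in (INF W :: real^'n^'k. SUP M :: real^'k^'k. ereal (L_PSP X W M Y)) = ereal v
           \<and> (SUP M :: real^'k^'k. ereal (L_PSP X W0 M Y)) = ereal v
           \<and> L_PSP X W0 M0 Y = v" by (rule partA)
next
  fix W :: "real^'n^'k"
  show "let v = trace ((- (3 / real CARD('t) powr (2/3))) *\<^sub>R
                          psd_powr (W ** X ** transpose X ** transpose W) (2/3)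
                       + 2 *\<^sub>R (W ** transpose W))
        in (SUP M :: real^'k^'k. INF Y :: real^'t^'k. ereal (L_PSP X W M Y)) = ereal v
           \<and> (INF Y :: real^'t^'k. SUP M :: real^'k^'k. ereal (L_PSP X W M Y)) = ereal v"
    by (rule partB)
qed

end
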